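(* Let $n\geq1$, $\eta\in\Omega$, $l\in\{1,\ldots,n\}$ and $(r_1,\ldots,r_l)\in\mathbb N^l$. For $1\leq i\leq l$ let $T_{i,\eta}+r_i=\{v+(r_i,r_i):v\in T_{i,\eta}\}$. Then $$\mathrm{span}_{\mathbb C}\{\bar v: v\in T_{0,\eta}\cup\textstyle\bigcup_{i=1}^l(T_{i,\eta}+r_i)\}=\mathrm{span}_{\mathbb C}\{\bar v:v\in\bigcup_{i=0}^lT_{i,\eta}\}.$$ In particular, $\overline{v_{l,\eta}+(r,r)}\in\mathrm{span}_{\mathbb C}\{\bar v:v\in\bigcup_{i=0}^lT_{i,\eta}\}$ for all $r\in\mathbb N$.
   Context: $n\geq1$ is fixed. $\Lambda_{2,n}=\{\alpha\in\mathbb N^2:1\leq\alpha_1+\alpha_2\leq n\}$, $\lambda_{2,n}=|\Lambda_{2,n}|$; for $v\in\mathbb N^2$, $\bar v=\big(\binom{v_1}{\alpha_1}\binom{v_2}{\alpha_2}\big)_{\alpha\in\Lambda_{2,n}}\in\mathbb C^{\lambda_{2,n}}$. $\Omega$ is the set of sequences $\eta=(z,d_0,d_1,\ldots,d_r)$ with $z\in\{0,1\}$, $d_0=0$, $d_i\geq1$ for $1\leq i\leq r$, $\sum_{i=0}^rd_i=n$. For $j\in\{1,\ldots,n\}$ let $t\in\{1,\ldots,r\}$ be unique with $\sum_{i=0}^{t-1}d_i<j\leq\sum_{i=0}^td_i$, $c=j-\sum_{i=0}^{t-1}d_i$; $v_{j,\eta}=(\sum_{i\text{ odd},i<t}d_i+c,0)$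 if $z=1,t$ odd; $(0,\sum_{i\text{ even},i<t}d_i+c)$ if $z=1,t$ even; $(0,\sum_{i\text{ odd},i<t}d_i+c)$ if $z=0,t$ odd; $(\sum_{i\text{ even},i<t}d_i+c,0)$ if $z=0,t$ even. $T_{j,\eta}=\{v_{j,\eta}+p(1,1):0\leq p\leq n-j\}$ for $1\leq j\leq n$, and $T_{0,\eta}=\{(p,p):1\leq p\leq n\}$. *)

theory Defs
  imports Complex_Main "HOL-Library.Function_Algebras"
begin

definition Lambda2 :: "nat \<Rightarrow> (nat \<times> nat) set" where
  "Lambda2 n = {(a1, a2). 1 \<le> a1 + a2 \<and> a1 + a2 \<le> n}"

text \<open>The vector bar v in C^{lambda_{2,n}}, represented as a function on the index
  set Lambda_{2,n} (extended by 0 outside of it).\<close>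
definition barv :: "nat \<Rightarrow> nat \<times> nat \<Rightarrow> (nat \<times> nat \<Rightarrow> complex)" where
  "barv n v = (\<lambda>\<alpha>. if \<alpha> \<in> Lambda2 n
      then of_nat ((fst v choose fst \<alpha>) * (snd v choose snd \<alpha>)) else 0)"

definition cspan :: "(nat \<times> nat \<Rightarrow> complex) set \<Rightarrow> (nat \<times> nat \<Rightarrow> complex) set" where
  "cspan = module.span (\<lambda>(c::complex) f x. c * f x)"

text \<open>eta = (z, d_0, d_1, ..., d_r) is represented as a pair (z, ds) with
  ds = [d_0, d_1, ..., d_r], so r = length ds - 1.\<close>
definition Omega :: "nat \<Rightarrow> (nat \<times> nat list) set" where
  "Omega n = {(z, ds). z \<in> {0, 1} \<and> ds \<noteq> [] \<and> ds ! 0 = 0 \<and>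
      (\<forall>i \<in> {1..<length ds}. 1 \<le> ds ! i) \<and> sum_list ds = n}"

definition psum :: "nat list \<Rightarrow> nat \<Rightarrow> nat" where
  "psum ds t = (\<Sum>i\<in>{0..t}. ds ! i)"

definition vvec :: "nat \<Rightarrow> nat \<times> nat list \<Rightarrow> nat \<times> nat" where
  "vvec j \<eta> = (let z = fst \<eta>; ds = snd \<eta>; r = length ds - 1;
      t = (THE t. 1 \<le> t \<and> t \<le> r \<and> psum ds (t - 1) < j \<and> j \<le> psum ds t);
      c = j - psum ds (t - 1);
      so = (\<Sum>i\<in>{i. i < t \<and> odd i}. ds ! i) + c;
      se = (\<Sum>i\<in>{i. i < t \<and> even i}. ds ! i) + c
    in if z = 1 then (if odd t then (so, 0) else (0, se))
       else (if odd t then (0, so) else (se, 0)))"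

definition Tset :: "nat \<Rightarrow> nat \<times> nat list \<Rightarrow> nat \<Rightarrow> (nat \<times> nat) set" where
  "Tset n \<eta> j = (if j = 0 then {(p, p) | p. 1 \<le> p \<and> p \<le> n}
      else {(fst (vvec j \<eta>) + p, snd (vvec j \<eta>) + p) | p. p \<le> n - j})"

definition shift :: "nat \<Rightarrow> nat \<times> nat \<Rightarrow> nat \<times> nat" where
  "shift r v = (fst v + r, snd v + r)"

end

theory Submission
  imports Defs
begin


definition dx :: "(nat \<Rightarrow> nat \<Rightarrow> 'a::ab_group_add) \<Rightarrow> nat \<Rightarrow> nat \<Rightarrow> 'a" where
  "dx f = (\<lambda>x y. f (Suc x) y - f x y)"
definition dy :: "(nat \<Rightarrow> nat \<Rightarrow> 'a::ab_group_add) \<Rightarrow> nat \<Rightarrow> nat \<Rightarrow> 'a" where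
  "dy f = (\<lambda>x y. f x (Suc y) - f x y)"
definition dd :: "(nat \<Rightarrow> nat \<Rightarrow> 'a::ab_group_add) \<Rightarrow> nat \<Rightarrow> nat \<Rightarrow> 'a" where
  "dd f = (\<lambda>x y. f (Suc x) (Suc y) - f x y)"

lemma gen_m:
  fixes W :: "'a::ab_group_add set"
  assumes cl: "\<forall>u\<in>W. \<forall>v\<in>W. u + v \<in> W \<and> u - v \<in> W"
  shows "(\<forall>x y. (dd^^m) g x y \<in> W) \<Longrightarrow> (\<forall>t. R \<le> t \<and> t < R + m \<longrightarrow> g t t \<in> W)
     \<Longrightarrow> g t t \<in> W"
proof (induction m arbitrary: g t)
  case 0
  then show ?case by simp
next
  case (Suc m)
  have add: "\<And>u v. u \<in> W \<Longrightarrow> v \<in> W \<Longrightarrow> u + v \<in> W" using cl by blast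
  have dif: "\<And>u v. u \<in> W \<Longrightarrow> v \<in> W \<Longrightarrow> u - v \<in> W" using cl by blast
  have v: "\<forall>x y. (dd^^m) (dd g) x y \<in> W" using Suc.prems(1) by (simp add: funpow_Suc_right del: funpow.simps)
  have w: "\<forall>t. R \<le> t \<and> t < R + m \<longrightarrow> dd g t t \<in> W"
    using Suc.prems(2) dif by (auto simp: dd_def)
  have D: "\<And>t. dd g t t \<in> W" using Suc.IH[OF v w] .
  have R: "g R R \<in> W" using Suc.prems(2) by auto
  have up: "g (R+k) (R+k) \<in> W" for k
  proof (induction k)
    case 0 then show ?case using R by simp
  next
    case (Suc k)
    have "g (R + Suc k) (R + Suc k) = dd g (R+k) (R+k) + g (R+k) (R+k)" by (simp add: dd_def)
    then show ?case using add[OF D Suc.IH] by simp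
  qed
  have down: "k \<le> R \<Longrightarrow> g (R-k) (R-k) \<in> W" for k
  proof (induction k)
    case 0 then show ?case using R by simp
  next
    case (Suc k)
    have e: "Suc (R - Suc k) = R - k" using Suc.prems by simp
    have "g (R - Suc k) (R - Suc k) = g (R-k) (R-k) - dd g (R - Suc k) (R - Suc k)"
      by (simp add: dd_def e)
    then show ?case using dif[OF Suc.IH D] Suc.prems by simp
  qed
  show ?case
  proof (cases "R \<le> t")
    case True then show ?thesis using up[of "t - R"] by simp
  next
    case False then show ?thesis using down[of "R - t"] by simp
  qed
qed

lemma gen_b:
  fixes W :: "'a::ab_group_add set"
  assumes cl: "\<forall>u\<in>W. \<forall>v\<in>W. u + v \<in> W \<and> u - v \<in> W"
  shows "(\<forall>x y. (dd^^m) ((dy^^b) g) x y \<in> W) \<Longrightarrow> (\<forall>x y. y \<le> x + b \<and> x < y \<longrightarrow> g x y \<in> W)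
     \<Longrightarrow> (\<forall>t. R \<le> t \<and> t < R + m \<longrightarrow> g t t \<in> W) \<Longrightarrow> g t t \<in> W"
proof (induction b arbitrary: g t)
  case 0
  then show ?case using gen_m[OF cl, of m g R t] by simp
next
  case (Suc b)
  have add: "\<And>u v. u \<in> W \<Longrightarrow> v \<in> W \<Longrightarrow> u + v \<in> W" using cl by blast
  have dif: "\<And>u v. u \<in> W \<Longrightarrow> v \<in> W \<Longrightarrow> u - v \<in> W" using cl by blast
  have v: "\<forall>x y. (dd^^m) ((dy^^b) (dy g)) x y \<in> W" using Suc.prems(1) by (simp add: funpow_Suc_right del: funpow.simps)
  have k: "\<forall>x y. y \<le> x + b \<and> x < y \<longrightarrow> dy g x y \<in> W"
    using Suc.prems(2) dif by (auto simp: dy_def)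
  have w: "\<forall>t. R \<le> t \<and> t < R + m \<longrightarrow> dy g t t \<in> W"
    using Suc.prems(2,3) dif by (auto simp: dy_def)
  have D: "dy g t t \<in> W" using Suc.IH[OF v k w] .
  have "g t t = g t (Suc t) - dy g t t" by (simp add: dy_def)
  then show ?case using dif[OF _ D, of "g t (Suc t)"] Suc.prems(2) by auto
qed

lemma gen_a:
  fixes W :: "'a::ab_group_add set"
  assumes cl: "\<forall>u\<in>W. \<forall>v\<in>W. u + v \<in> W \<and> u - v \<in> W"
  shows "(\<forall>x y. (dd^^m) ((dy^^b) ((dx^^a) g)) x y \<in> W) \<Longrightarrow> (\<forall>x y. y \<le> x + b \<and> x < y + a \<longrightarrow> g x y \<in> W)
     \<Longrightarrow> (\<forall>t. R \<le> t \<and> t < R + m \<longrightarrow> g (a+t) t \<in> W) \<Longrightarrow> g (a+t) t \<in> W"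
proof (induction a arbitrary: g t)
  case 0
  then show ?case using gen_b[OF cl, of m b g R t] by simp
next
  case (Suc a)
  have add: "\<And>u v. u \<in> W \<Longrightarrow> v \<in> W \<Longrightarrow> u + v \<in> W" using cl by blast
  have dif: "\<And>u v. u \<in> W \<Longrightarrow> v \<in> W \<Longrightarrow> u - v \<in> W" using cl by blast
  have v: "\<forall>x y. (dd^^m) ((dy^^b) ((dx^^a) (dx g))) x y \<in> W" using Suc.prems(1) by (simp add: funpow_Suc_right del: funpow.simps)
  have k: "\<forall>x y. y \<le> x + b \<and> x < y + a \<longrightarrow> dx g x y \<in> W"
    using Suc.prems(2) dif by (auto simp: dx_def)
  have w: "\<forall>t. R \<le> t \<and> t < R + m \<longrightarrow> dx g (a+t) t \<in> W"
  proof (intro allI impI)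
    fix t assume "R \<le> t \<and> t < R + m"
    then have "g (Suc a + t) t \<in> W" "g (a+t) t \<in> W" using Suc.prems(2,3) by auto
    then show "dx g (a+t) t \<in> W" using dif by (simp add: dx_def)
  qed
  have D: "dx g (a+t) t \<in> W" using Suc.IH[OF v k w] .
  have "g (Suc a + t) t = dx g (a+t) t + g (a+t) t" by (simp add: dx_def)
  then show ?case using add[OF D, of "g (a+t) t"] Suc.prems(2) by auto
qed


definition FF :: "nat \<Rightarrow> nat \<Rightarrow> nat \<Rightarrow> nat \<Rightarrow> complex" where
  "FF i j = (\<lambda>x y. of_nat (x choose i) * of_nat (y choose j))"

lemma dx_add: "dx (f + g) = dx f + dx g" by (auto simp: dx_def fun_eq_iff)
lemma dy_add: "dy (f + g) = dy f + dy g" by (auto simp: dy_def fun_eq_iff)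
lemma dd_add: "dd (f + g) = dd f + dd g" by (auto simp: dd_def fun_eq_iff)
lemma dx_0: "dx 0 = 0" by (auto simp: dx_def fun_eq_iff)
lemma dy_0: "dy 0 = 0" by (auto simp: dy_def fun_eq_iff)
lemma dd_0: "dd 0 = 0" by (auto simp: dd_def fun_eq_iff)

lemma pow_add: fixes D :: "'c::ab_group_add \<Rightarrow> 'c" assumes "\<And>f g. D (f + g) = D f + D g" shows "(D^^k) (f + g) = (D^^k) f + (D^^k) g"
  by (induction k) (auto simp: assms)
lemma pow_0: fixes D :: "'c::ab_group_add \<Rightarrow> 'c" assumes "D 0 = 0" shows "(D^^k) 0 = 0"
  by (induction k) (auto simp: assms)
lemma ddp0: "(dd^^k) (0::nat\<Rightarrow>nat\<Rightarrow>'a::ab_group_add) = 0"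
  by (induction k) (auto simp: dd_def fun_eq_iff)
lemma dyp0: "(dy^^k) (0::nat\<Rightarrow>nat\<Rightarrow>'a::ab_group_add) = 0"
  by (induction k) (auto simp: dy_def fun_eq_iff)
lemma dxp0: "(dx^^k) (0::nat\<Rightarrow>nat\<Rightarrow>'a::ab_group_add) = 0"
  by (induction k) (auto simp: dx_def fun_eq_iff)
lemma z3: "(dd^^m) ((dy^^b) ((dx^^a) (0::nat\<Rightarrow>nat\<Rightarrow>'a::ab_group_add))) = 0"
    by (simp only: ddp0 dyp0 dxp0)

lemma dx_FF: "dx (FF (Suc i) j) = FF i j" "dx (FF 0 j) = 0"
  by (auto simp: dx_def FF_def fun_eq_iff algebra_simps)
lemma dy_FF: "dy (FF i (Suc j)) = FF i j" "dy (FF i 0) = 0"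
  by (auto simp: dy_def FF_def fun_eq_iff algebra_simps)
lemma dd_FF: "dd (FF (Suc i) (Suc j)) = FF i j + FF i (Suc j) + FF (Suc i) j"
  "dd (FF (Suc i) 0) = FF i 0" "dd (FF 0 (Suc j)) = FF 0 j" "dd (FF 0 0) = 0"
  by (auto simp: dd_def FF_def fun_eq_iff algebra_simps)

lemma van_m: "i + j < m \<Longrightarrow> (dd^^m) (FF i j) = 0"
proof (induction m arbitrary: i j)
  case 0 then show ?case by simp
next
  case (Suc m)
  have e: "(dd^^Suc m) (FF i j) = (dd^^m) (dd (FF i j))" by (simp add: funpow_Suc_right del: funpow.simps)
  show ?case
  proof (cases i)
    case 0
    then show ?thesis
    proof (cases j)
      case 0
      have "(dd^^Suc m) (FF i j) = (dd^^m) (dd (FF 0 0))" using e \<open>i=0\<close> \<open>j=0\<close> by simp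
      also have "\<dots> = (dd^^m) 0" by (simp only: dd_FF(4))
      also have "\<dots> = 0" by (rule ddp0)
      finally show ?thesis .
    next
      case (Suc j') then show ?thesis using e \<open>i=0\<close> dd_FF Suc.IH[of 0 j'] Suc.prems by simp
    qed
  next
    case (Suc i')
    then show ?thesis
    proof (cases j)
      case 0 then show ?thesis using e \<open>i=Suc i'\<close> dd_FF Suc.IH[of i' 0] Suc.prems by simp
    next
      case (Suc j')
      have h1: "(dd^^m) (FF i' j') = 0" "(dd^^m) (FF i' (Suc j')) = 0" "(dd^^m) (FF (Suc i') j') = 0"
        using Suc.IH[of i' j'] Suc.IH[of i' "Suc j'"] Suc.IH[of "Suc i'" j'] Suc.prems \<open>i=Suc i'\<close> \<open>j = Suc j'\<close> by (simp_all add: zero_fun_def)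
      have "(dd^^Suc m) (FF i j) = (dd^^m) (dd (FF (Suc i') (Suc j')))" using e \<open>i=Suc i'\<close> \<open>j = Suc j'\<close> by simp
      also have "\<dots> = (dd^^m) (FF i' j') + (dd^^m) (FF i' (Suc j')) + (dd^^m) (FF (Suc i') j')"
        by (simp only: dd_FF(1) pow_add[of dd, OF dd_add])
      also have "\<dots> = 0" by (simp only: h1 add_0)
      finally show ?thesis .
    qed
  qed
qed

lemma van_b: "i + j < b + m \<Longrightarrow> (dd^^m) ((dy^^b) (FF i j)) = 0"
proof (induction b arbitrary: j)
  case 0 then show ?case using van_m by simp
next
  case (Suc b)
  have e: "(dy^^Suc b) (FF i j) = (dy^^b) (dy (FF i j))" by (simp add: funpow_Suc_right del: funpow.simps)
  show ?case
  proof (cases j)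
    case 0
    have "(dy^^Suc b) (FF i j) = (dy^^b) (dy (FF i 0))" using e \<open>j=0\<close> by simp
    also have "\<dots> = (dy^^b) 0" by (simp only: dy_FF(2))
    finally have "(dd^^m) ((dy^^Suc b) (FF i j)) = (dd^^m) ((dy^^b) 0)" by simp
    also have "\<dots> = 0" by (simp only: dyp0 ddp0)
    finally show ?thesis .
  next
    case (Suc j') then show ?thesis using e dy_FF Suc.IH[of j'] Suc.prems by simp
  qed
qed

lemma van_a: "i + j < a + b + m \<Longrightarrow> (dd^^m) ((dy^^b) ((dx^^a) (FF i j))) = 0"
proof (induction a arbitrary: i)
  case 0 then show ?case using van_b by simp
next
  case (Suc a)
  have e: "(dx^^Suc a) (FF i j) = (dx^^a) (dx (FF i j))" by (simp add: funpow_Suc_right del: funpow.simps)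
  show ?case
  proof (cases i)
    case 0
    have "(dx^^Suc a) (FF i j) = (dx^^a) (dx (FF 0 j))" using e \<open>i=0\<close> by simp
    also have "\<dots> = (dx^^a) 0" by (simp only: dx_FF(2))
    finally have "(dd^^m) ((dy^^b) ((dx^^Suc a) (FF i j))) = (dd^^m) ((dy^^b) ((dx^^a) 0))" by simp
    also have "\<dots> = 0" by (rule z3)
    finally show ?thesis .
  next
    case (Suc i') then show ?thesis using e dx_FF Suc.IH[of i'] Suc.prems by simp
  qed
qed

definition ev :: "'b \<Rightarrow> (nat \<Rightarrow> nat \<Rightarrow> ('b \<Rightarrow> 'a::ab_group_add)) \<Rightarrow> nat \<Rightarrow> nat \<Rightarrow> 'a" where
  "ev \<beta> f = (\<lambda>x y. f x y \<beta>)"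

lemma ev_ops: "(dd^^m) ((dy^^b) ((dx^^a) (ev \<beta> f))) = ev \<beta> ((dd^^m) ((dy^^b) ((dx^^a) f)))"
proof -
  have 1: "(dx^^a) (ev \<beta> f) = ev \<beta> ((dx^^a) f)" for f :: "nat \<Rightarrow> nat \<Rightarrow> ('b \<Rightarrow> 'a)"
    by (induction a) (auto simp: ev_def dx_def fun_eq_iff)
  have 2: "(dy^^b) (ev \<beta> f) = ev \<beta> ((dy^^b) f)" for f :: "nat \<Rightarrow> nat \<Rightarrow> ('b \<Rightarrow> 'a)"
    by (induction b) (auto simp: ev_def dy_def fun_eq_iff)
  have 3: "(dd^^m) (ev \<beta> f) = ev \<beta> ((dd^^m) f)" for f :: "nat \<Rightarrow> nat \<Rightarrow> ('b \<Rightarrow> 'a)"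
    by (induction m) (auto simp: ev_def dd_def fun_eq_iff)
  show ?thesis by (simp add: 1 2 3)
qed

lemma van_G:
  assumes "n < a + b + m"
  shows "(dd^^m) ((dy^^b) ((dx^^a) (\<lambda>x y. barv n (x,y)))) = 0"
    "(dd^^m) ((dy^^b) ((dx^^a) (\<lambda>x y. barv n (y,x)))) = 0"
proof -
  have c1: "ev \<beta> (\<lambda>x y. barv n (x,y)) = (if \<beta> \<in> Lambda2 n then FF (fst \<beta>) (snd \<beta>) else 0)" for \<beta>
    by (auto simp: ev_def barv_def FF_def fun_eq_iff)
  have c2: "ev \<beta> (\<lambda>x y. barv n (y,x)) = (if \<beta> \<in> Lambda2 n then FF (snd \<beta>) (fst \<beta>) else 0)" for \<beta>
    by (auto simp: ev_def barv_def FF_def fun_eq_iff)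
  have L: "\<beta> \<in> Lambda2 n \<Longrightarrow> fst \<beta> + snd \<beta> \<le> n" for \<beta> by (auto simp: Lambda2_def)
  have z: "(dd^^m) ((dy^^b) ((dx^^a) (0::nat\<Rightarrow>nat\<Rightarrow>complex))) = 0"
    by (simp only: ddp0 dyp0 dxp0)
  show "(dd^^m) ((dy^^b) ((dx^^a) (\<lambda>x y. barv n (x,y)))) = 0"
  proof (rule ext, rule ext, rule ext)
    fix x y \<beta>
    have "(dd^^m) ((dy^^b) ((dx^^a) (\<lambda>x y. barv n (x,y)))) x y \<beta>
       = (dd^^m) ((dy^^b) ((dx^^a) (ev \<beta> (\<lambda>x y. barv n (x,y))))) x y"
      by (simp only: ev_ops) (simp add: ev_def)
    also have "\<dots> = 0"
    proof (cases "\<beta> \<in> Lambda2 n")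
      case True
      then have "ev \<beta> (\<lambda>x y. barv n (x,y)) = FF (fst \<beta>) (snd \<beta>)" using c1 by simp
      moreover have "(dd^^m) ((dy^^b) ((dx^^a) (FF (fst \<beta>) (snd \<beta>)))) = 0"
        using van_a[of "fst \<beta>" "snd \<beta>" a b m] L[OF True] assms by simp
      ultimately show ?thesis by simp
    next
      case False
      then have "ev \<beta> (\<lambda>x y. barv n (x,y)) = 0" using c1 by simp
      then show ?thesis using z by simp
    qed
    finally show "(dd^^m) ((dy^^b) ((dx^^a) (\<lambda>x y. barv n (x,y)))) x y \<beta> = 0 x y \<beta>" by simp
  qed
  show "(dd^^m) ((dy^^b) ((dx^^a) (\<lambda>x y. barv n (y,x)))) = 0"
  proof (rule ext, rule ext, rule ext)
    fix x y \<beta>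
    have "(dd^^m) ((dy^^b) ((dx^^a) (\<lambda>x y. barv n (y,x)))) x y \<beta>
       = (dd^^m) ((dy^^b) ((dx^^a) (ev \<beta> (\<lambda>x y. barv n (y,x))))) x y"
      by (simp only: ev_ops) (simp add: ev_def)
    also have "\<dots> = 0"
    proof (cases "\<beta> \<in> Lambda2 n")
      case True
      then have "ev \<beta> (\<lambda>x y. barv n (y,x)) = FF (snd \<beta>) (fst \<beta>)" using c2 by simp
      moreover have "(dd^^m) ((dy^^b) ((dx^^a) (FF (snd \<beta>) (fst \<beta>)))) = 0"
        using van_a[of "snd \<beta>" "fst \<beta>" a b m] L[OF True] assms by simp
      ultimately show ?thesis by simp
    next
      case False
      then have "ev \<beta> (\<lambda>x y. barv n (y,x)) = 0" using c2 by simp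
      then show ?thesis using z by simp
    qed
    finally show "(dd^^m) ((dy^^b) ((dx^^a) (\<lambda>x y. barv n (y,x)))) x y \<beta> = 0 x y \<beta>" by simp
  qed
qed



definition blk :: "nat list \<Rightarrow> nat \<Rightarrow> nat" where
  "blk ds j = (THE t. 1 \<le> t \<and> t \<le> length ds - 1 \<and> psum ds (t - 1) < j \<and> j \<le> psum ds t)"
definition spo :: "nat list \<Rightarrow> nat \<Rightarrow> nat" where
  "spo ds t = (\<Sum>i\<in>{i. i < t \<and> odd i}. ds ! i)"
definition spe :: "nat list \<Rightarrow> nat \<Rightarrow> nat" where
  "spe ds t = (\<Sum>i\<in>{i. i < t \<and> even i}. ds ! i)"
definition OA :: "nat list \<Rightarrow> nat \<Rightarrow> nat" where
  "OA ds j = (if j = 0 then 0 else spo ds (blk ds j) + (if odd (blk ds j) then j - psum ds (blk ds j - 1) else 0))"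
definition EA :: "nat list \<Rightarrow> nat \<Rightarrow> nat" where
  "EA ds j = (if j = 0 then 0 else spe ds (blk ds j) + (if even (blk ds j) then j - psum ds (blk ds j - 1) else 0))"

lemma spo_Suc: "spo ds (Suc t) = spo ds t + (if odd t then ds ! t else 0)"
proof -
  have "{i. i < Suc t \<and> odd i} = (if odd t then insert t {i. i < t \<and> odd i} else {i. i < t \<and> odd i})"
    by (auto simp: less_Suc_eq)
  then show ?thesis by (simp add: spo_def)
qed
lemma spe_Suc: "spe ds (Suc t) = spe ds t + (if even t then ds ! t else 0)"
proof -
  have "{i. i < Suc t \<and> even i} = (if even t then insert t {i. i < t \<and> even i} else {i. i < t \<and> even i})"
    by (auto simp: less_Suc_eq)
  then show ?thesis by (simp add: spe_def)
qed
lemma spo_1: "spo ds (Suc 0) = 0" by (simp add: spo_def)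
lemma spe_1: "spe ds (Suc 0) = ds ! 0"
proof -
  have "{i. i < Suc 0 \<and> even i} = {0}" by auto
  then show ?thesis by (simp add: spe_def)
qed

lemma psum_mono: "a \<le> b \<Longrightarrow> psum ds a \<le> psum ds b"
  unfolding psum_def by (rule sum_mono2) auto
lemma psum_Suc: "psum ds (Suc t) = psum ds t + ds ! Suc t"
  unfolding psum_def by simp
lemma psum_0: "psum ds 0 = ds ! 0"
  unfolding psum_def by simp

locale omg =
  fixes n :: nat and z :: nat and ds :: "nat list"
  assumes om: "(z, ds) \<in> Omega n"
begin

lemma ne: "ds \<noteq> []" and d0: "ds ! 0 = 0" and dpos: "\<And>i. 1 \<le> i \<Longrightarrow> i < length ds \<Longrightarrow> 1 \<le> ds ! i"
  and sl: "sum_list ds = n" and zz: "z = 0 \<or> z = 1"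
  using om by (auto simp: Omega_def)

lemma psum_r: "psum ds (length ds - 1) = n"
proof -
  have "{0..length ds - 1} = {0..<length ds}" using ne by (cases ds) auto
  then show ?thesis using sl by (simp add: psum_def sum_list_sum_nth)
qed

lemma blk_eq:
  assumes "1 \<le> t" "t \<le> length ds - 1" "psum ds (t - 1) < j" "j \<le> psum ds t"
  shows "blk ds j = t"
  unfolding blk_def
proof (rule the_equality)
  show "1 \<le> t \<and> t \<le> length ds - 1 \<and> psum ds (t - 1) < j \<and> j \<le> psum ds t" using assms by simp
next
  fix t' assume h: "1 \<le> t' \<and> t' \<le> length ds - 1 \<and> psum ds (t' - 1) < j \<and> j \<le> psum ds t'"
  show "t' = t"
  proof (rule ccontr)
    assume "t' \<noteq> t"
    then consider "t' < t" | "t < t'" by linarith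
    then show False
    proof cases
      case 1
      then have "psum ds t' \<le> psum ds (t - 1)" by (intro psum_mono) simp
      then show False using h assms by linarith
    next
      case 2
      then have "psum ds t \<le> psum ds (t' - 1)" by (intro psum_mono) simp
      then show False using h assms by linarith
    qed
  qed
qed

lemma blk_ex:
  assumes "1 \<le> j" "j \<le> n"
  shows "\<exists>t. 1 \<le> t \<and> t \<le> length ds - 1 \<and> psum ds (t - 1) < j \<and> j \<le> psum ds t"
proof -
  define t where "t = (LEAST t. j \<le> psum ds t)"
  have ex: "j \<le> psum ds (length ds - 1)" using psum_r assms by simp
  have jt: "j \<le> psum ds t" unfolding t_def using ex by (rule LeastI)
  have tr: "t \<le> length ds - 1" unfolding t_def using ex by (rule Least_le)
  have t0: "t \<noteq> 0"
  proof
    assume "t = 0" then show False using jt psum_0[of ds] d0 assms by simp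
  qed
  have "\<not> j \<le> psum ds (t - 1)" unfolding t_def
    by (rule not_less_Least) (use t0 in \<open>simp add: t_def\<close>)
  then show ?thesis using jt tr t0 by (intro exI[of _ t]) auto
qed

lemma step:
  assumes "j < n"
  shows "(odd (blk ds (Suc j)) \<and> OA ds (Suc j) = Suc (OA ds j) \<and> EA ds (Suc j) = EA ds j) \<or>
         (even (blk ds (Suc j)) \<and> EA ds (Suc j) = Suc (EA ds j) \<and> OA ds (Suc j) = OA ds j)"
proof -
  obtain t' where t': "1 \<le> t'" "t' \<le> length ds - 1" "psum ds (t' - 1) < Suc j" "Suc j \<le> psum ds t'"
    using blk_ex[of "Suc j"] assms by auto
  have b': "blk ds (Suc j) = t'" using blk_eq[OF t'] .
  show ?thesis
  proof (cases "psum ds (t' - 1) < j")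
    case True
    then have j0: "j \<noteq> 0" by auto
    have "blk ds j = t'" using blk_eq[of t' j] t' True by simp
    then show ?thesis using b' j0 True by (auto simp: OA_def EA_def)
  next
    case False
    then have jp: "j = psum ds (t' - 1)" using t' by simp
    show ?thesis
    proof (cases "t' = 1")
      case True
      then have "j = 0" using jp psum_0 d0 by simp
      then show ?thesis using b' True by (simp add: OA_def EA_def spo_1 spe_1 d0 psum_0)
    next
      case False
      define t where "t = t' - 1"
      have tt: "t' = Suc t" "1 \<le> t" using False t' by (auto simp: t_def)
      have dt: "1 \<le> ds ! t" using dpos[of t] tt t' by simp
      have ps: "psum ds t = psum ds (t - 1) + ds ! t" using psum_Suc[of ds "t - 1"] tt by simp
      have jt: "j = psum ds t" using jp by (simp add: t_def)
      have bj: "blk ds j = t" using blk_eq[of t j] tt t' ps jt dt by simp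
      have j0: "j \<noteq> 0" using jt ps dt by simp
      have c: "j - psum ds (t - 1) = ds ! t" using jt ps by simp
      have "Suc j - psum ds (t' - 1) = 1" using jp by simp
      then show ?thesis using b' bj j0 c tt
        by (auto simp: OA_def EA_def spo_Suc spe_Suc)
    qed
  qed
qed

lemma vvec_eq:
  assumes "j \<noteq> 0"
  shows "vvec j (z, ds) = (if z = 1 then (if odd (blk ds j) then (OA ds j, 0) else (0, EA ds j))
           else (if odd (blk ds j) then (0, OA ds j) else (EA ds j, 0)))"
  using assms by (simp add: vvec_def Let_def OA_def EA_def spo_def spe_def blk_def)

end

definition xa :: "nat \<times> nat list \<Rightarrow> nat \<Rightarrow> nat" where
  "xa \<eta> j = (if fst \<eta> = 1 then OA (snd \<eta>) j else EA (snd \<eta>) j)"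
definition yb :: "nat \<times> nat list \<Rightarrow> nat \<Rightarrow> nat" where
  "yb \<eta> j = (if fst \<eta> = 1 then EA (snd \<eta>) j else OA (snd \<eta>) j)"

lemma V:
  assumes "\<eta> \<in> Omega n" "j < n"
  shows "(vvec (Suc j) \<eta> = (Suc (xa \<eta> j), 0) \<and> xa \<eta> (Suc j) = Suc (xa \<eta> j) \<and> yb \<eta> (Suc j) = yb \<eta> j) \<or>
         (vvec (Suc j) \<eta> = (0, Suc (yb \<eta> j)) \<and> yb \<eta> (Suc j) = Suc (yb \<eta> j) \<and> xa \<eta> (Suc j) = xa \<eta> j)"
proof -
  obtain z ds where e: "\<eta> = (z, ds)" by (cases \<eta>)
  interpret omg n z ds using assms(1) e by unfold_locales simp
  show ?thesis using step[OF assms(2)] vvec_eq[of "Suc j"] zz e by (auto simp: xa_def yb_def)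
qed

lemma xy0: "xa \<eta> 0 = 0" "yb \<eta> 0 = 0" by (auto simp: xa_def yb_def OA_def EA_def)

lemma xysum: "\<eta> \<in> Omega n \<Longrightarrow> j \<le> n \<Longrightarrow> xa \<eta> j + yb \<eta> j = j"
proof (induction j)
  case 0 then show ?case by (simp add: xy0)
next
  case (Suc j) then show ?case using V[of \<eta> n j] by auto
qed

lemma xymono: "\<eta> \<in> Omega n \<Longrightarrow> j \<le> n \<Longrightarrow> i \<le> j \<Longrightarrow> xa \<eta> i \<le> xa \<eta> j \<and> yb \<eta> i \<le> yb \<eta> j"
proof (induction j)
  case 0 then show ?case by simp
next
  case (Suc j)
  show ?case
  proof (cases "i = Suc j")
    case True then show ?thesis by simp
  next
    case False then show ?thesis using Suc V[of \<eta> n j] by auto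
  qed
qed



lemma bar00: "barv n (0,0) = 0"
  by (auto simp: barv_def Lambda2_def fun_eq_iff)

lemma regions:
  fixes W :: "(nat \<times> nat \<Rightarrow> complex) set"
  assumes cl: "\<forall>u\<in>W. \<forall>v\<in>W. u + v \<in> W \<and> u - v \<in> W"
    and zero: "0 \<in> W"
    and Om: "\<eta> \<in> Omega n" and ln: "l \<le> n"
    and diag0: "\<forall>p. 1 \<le> p \<and> p \<le> n \<longrightarrow> barv n (p,p) \<in> W"
    and win0: "\<forall>i. 1 \<le> i \<and> i \<le> l \<longrightarrow> (\<exists>R. \<forall>p. R \<le> p \<and> p \<le> R + (n - i) \<longrightarrow>
                  barv n (fst (vvec i \<eta>) + p, snd (vvec i \<eta>) + p) \<in> W)"
  shows "j \<le> l \<Longrightarrow> \<forall>x y. y \<le> x + yb \<eta> j \<and> x \<le> y + xa \<eta> j \<longrightarrow> barv n (x,y) \<in> W"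
proof (induction j)
  case 0
  have diag: "\<And>p. 1 \<le> p \<Longrightarrow> p \<le> n \<Longrightarrow> barv n (p,p) \<in> W" using diag0 by blast
  have van: "\<forall>x y. (dd^^Suc n) (\<lambda>x y. barv n (x,y)) x y \<in> W"
    using van_G(1)[of n 0 0 "Suc n"] zero by simp
  have w: "\<forall>t. 0 \<le> t \<and> t < 0 + Suc n \<longrightarrow> (\<lambda>x y. barv n (x,y)) t t \<in> W"
  proof (intro allI impI)
    fix t assume "0 \<le> t \<and> t < 0 + Suc n"
    then show "(\<lambda>x y. barv n (x,y)) t t \<in> W" using diag zero bar00[of n] by (cases t) auto
  qed
  have "\<And>t. barv n (t,t) \<in> W" using gen_m[OF cl van w] by simp
  moreover have "\<And>x y. y \<le> x + yb \<eta> 0 \<and> x \<le> y + xa \<eta> 0 \<Longrightarrow> x = y" by (simp add: xy0)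
  ultimately show ?case by blast
next
  case (Suc j)
  have jn: "j < n" using Suc.prems ln by simp
  have IH: "\<And>x y. y \<le> x + yb \<eta> j \<Longrightarrow> x \<le> y + xa \<eta> j \<Longrightarrow> barv n (x,y) \<in> W"
    using Suc.IH Suc.prems by simp
  have sj: "xa \<eta> j + yb \<eta> j = j" using xysum[OF Om] jn by simp
  have "\<exists>R. \<forall>p. R \<le> p \<and> p \<le> R + (n - Suc j) \<longrightarrow>
      barv n (fst (vvec (Suc j) \<eta>) + p, snd (vvec (Suc j) \<eta>) + p) \<in> W"
    using win0 Suc.prems by simp
  then obtain R where R: "\<And>p. R \<le> p \<Longrightarrow> p \<le> R + (n - Suc j) \<Longrightarrow>
      barv n (fst (vvec (Suc j) \<eta>) + p, snd (vvec (Suc j) \<eta>) + p) \<in> W"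
    by blast
  from V[OF Om jn] show ?case
  proof
    assume h: "vvec (Suc j) \<eta> = (Suc (xa \<eta> j), 0) \<and> xa \<eta> (Suc j) = Suc (xa \<eta> j) \<and> yb \<eta> (Suc j) = yb \<eta> j"
    let ?g = "\<lambda>x y. barv n (x,y)"
    have van: "\<forall>x y. (dd^^(n - j)) ((dy^^(yb \<eta> j)) ((dx^^(Suc (xa \<eta> j))) ?g)) x y \<in> W"
      using van_G(1)[of n "Suc (xa \<eta> j)" "yb \<eta> j" "n - j"] zero sj jn by simp
    have kn: "\<forall>x y. y \<le> x + yb \<eta> j \<and> x < y + Suc (xa \<eta> j) \<longrightarrow> ?g x y \<in> W"
      using IH by simp
    have w: "\<forall>t. R \<le> t \<and> t < R + (n - j) \<longrightarrow> ?g (Suc (xa \<eta> j) + t) t \<in> W"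
    proof (intro allI impI)
      fix t assume t: "R \<le> t \<and> t < R + (n - j)"
      then have "t \<le> R + (n - Suc j)" using jn by linarith
      then show "?g (Suc (xa \<eta> j) + t) t \<in> W" using R[of t] t h by simp
    qed
    have C: "\<And>t. barv n (Suc (xa \<eta> j) + t, t) \<in> W"
      using gen_a[OF cl van kn w] by simp
    show ?thesis
    proof (intro allI impI)
      fix x y assume a: "y \<le> x + yb \<eta> (Suc j) \<and> x \<le> y + xa \<eta> (Suc j)"
      show "barv n (x,y) \<in> W"
      proof (cases "x \<le> y + xa \<eta> j")
        case True then show ?thesis using IH a h by simp
      next
        case False
        then have "x = Suc (xa \<eta> j) + y" using a h by simp
        then show ?thesis using C by simp
      qed
    qed
  next
    assume h: "vvec (Suc j) \<eta> = (0, Suc (yb \<eta> j)) \<and> yb \<eta> (Suc j) = Suc (yb \<eta> j) \<and> xa \<eta> (Suc j) = xa \<eta> j"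
    let ?g = "\<lambda>x y. barv n (y,x)"
    have van: "\<forall>x y. (dd^^(n - j)) ((dy^^(xa \<eta> j)) ((dx^^(Suc (yb \<eta> j))) ?g)) x y \<in> W"
      using van_G(2)[of n "Suc (yb \<eta> j)" "xa \<eta> j" "n - j"] zero sj jn by simp
    have kn: "\<forall>x y. y \<le> x + xa \<eta> j \<and> x < y + Suc (yb \<eta> j) \<longrightarrow> ?g x y \<in> W"
      using IH by simp
    have w: "\<forall>t. R \<le> t \<and> t < R + (n - j) \<longrightarrow> ?g (Suc (yb \<eta> j) + t) t \<in> W"
    proof (intro allI impI)
      fix t assume t: "R \<le> t \<and> t < R + (n - j)"
      then have "t \<le> R + (n - Suc j)" using jn by linarith
      then show "?g (Suc (yb \<eta> j) + t) t \<in> W" using R[of t] t h by (simp add: add.commute)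
    qed
    have C: "\<And>t. barv n (t, Suc (yb \<eta> j) + t) \<in> W"
      using gen_a[OF cl van kn w] by simp
    show ?thesis
    proof (intro allI impI)
      fix x y assume a: "y \<le> x + yb \<eta> (Suc j) \<and> x \<le> y + xa \<eta> (Suc j)"
      show "barv n (x,y) \<in> W"
      proof (cases "y \<le> x + yb \<eta> j")
        case True then show ?thesis using IH a h by simp
      next
        case False
        then have "y = Suc (yb \<eta> j) + x" using a h by simp
        then show ?thesis using C by simp
      qed
    qed
  qed
qed

lemma pts:
  assumes Om: "\<eta> \<in> Omega n" and "1 \<le> i" "i \<le> l" "l \<le> n"
  shows "snd (vvec i \<eta>) + p \<le> fst (vvec i \<eta>) + p + yb \<eta> l \<and> fst (vvec i \<eta>) + p \<le> snd (vvec i \<eta>) + p + xa \<eta> l"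
proof -
  obtain k where k: "i = Suc k" using assms by (cases i) auto
  have mo: "xa \<eta> i \<le> xa \<eta> l \<and> yb \<eta> i \<le> yb \<eta> l" using xymono[OF Om, of l i] assms by simp
  have kn: "k < n" using k assms by simp
  from V[OF Om kn] show ?thesis
  proof
    assume h: "vvec (Suc k) \<eta> = (Suc (xa \<eta> k), 0) \<and> xa \<eta> (Suc k) = Suc (xa \<eta> k) \<and> yb \<eta> (Suc k) = yb \<eta> k"
    then have "vvec i \<eta> = (xa \<eta> i, 0)" using k by simp
    then show ?thesis using mo by simp
  next
    assume h: "vvec (Suc k) \<eta> = (0, Suc (yb \<eta> k)) \<and> yb \<eta> (Suc k) = Suc (yb \<eta> k) \<and> xa \<eta> (Suc k) = xa \<eta> k"
    then have "vvec i \<eta> = (0, yb \<eta> i)" using k by simp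
    then show ?thesis using mo by simp
  qed
qed

lemma Mod: "module (\<lambda>(c::complex) (f::nat \<times> nat \<Rightarrow> complex) x. c * f x)"
  by unfold_locales (auto simp: fun_eq_iff algebra_simps)

lemma cspan_add: "u \<in> cspan X \<Longrightarrow> v \<in> cspan X \<Longrightarrow> u + v \<in> cspan X"
  unfolding cspan_def by (rule module.span_add[OF Mod])
lemma cspan_diff: "u \<in> cspan X \<Longrightarrow> v \<in> cspan X \<Longrightarrow> u - v \<in> cspan X"
  unfolding cspan_def by (rule module.span_diff[OF Mod])
lemma cspan_zero: "0 \<in> cspan X"
  unfolding cspan_def by (rule module.span_zero[OF Mod])
lemma cspan_base: "u \<in> X \<Longrightarrow> u \<in> cspan X"
  unfolding cspan_def by (rule module.span_base[OF Mod])
lemma cspan_cl: "\<forall>u\<in>cspan X. \<forall>v\<in>cspan X. u + v \<in> cspan X \<and> u - v \<in> cspan X"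
  using cspan_add cspan_diff by blast
lemma cspan_eq: "cspan S = cspan T \<longleftrightarrow> S \<subseteq> cspan T \<and> T \<subseteq> cspan S"
  unfolding cspan_def by (rule module.span_eq[OF Mod])

theorem proposition2p14:
  fixes n l :: nat and \<eta> :: "nat \<times> nat list" and r :: "nat \<Rightarrow> nat"
  assumes "1 \<le> n" and "\<eta> \<in> Omega n" and "1 \<le> l" and "l \<le> n"
  shows "cspan (barv n ` (Tset n \<eta> 0 \<union> (\<Union>i\<in>{1..l}. shift (r i) ` Tset n \<eta> i)))
           = cspan (barv n ` (\<Union>i\<in>{0..l}. Tset n \<eta> i))
       \<and> (\<forall>s::nat. barv n (shift s (vvec l \<eta>)) \<in> cspan (barv n ` (\<Union>i\<in>{0..l}. Tset n \<eta> i)))"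
proof -
  define S1 where "S1 = Tset n \<eta> 0 \<union> (\<Union>i\<in>{1..l}. shift (r i) ` Tset n \<eta> i)"
  define S2 where "S2 = (\<Union>i\<in>{0..l}. Tset n \<eta> i)"
  define Reg where "Reg = {(x,y). y \<le> x + yb \<eta> l \<and> x \<le> y + xa \<eta> l}"
  have Om: "\<eta> \<in> Omega n" using assms by simp
  have T0: "Tset n \<eta> 0 = {(p, p) | p. 1 \<le> p \<and> p \<le> n}" by (simp add: Tset_def)
  have Ti: "i \<noteq> 0 \<Longrightarrow> Tset n \<eta> i = {(fst (vvec i \<eta>) + p, snd (vvec i \<eta>) + p) | p. p \<le> n - i}" for i
    by (simp add: Tset_def)
  have ptsR: "1 \<le> i \<Longrightarrow> i \<le> l \<Longrightarrow> (fst (vvec i \<eta>) + p, snd (vvec i \<eta>) + p) \<in> Reg" for i p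
    using pts[OF Om, of i l p] assms by (simp add: Reg_def)
  have S1R: "S1 \<subseteq> Reg"
  proof
    fix v assume "v \<in> S1"
    then consider "v \<in> Tset n \<eta> 0" | i where "1 \<le> i" "i \<le> l" "v \<in> shift (r i) ` Tset n \<eta> i"
      unfolding S1_def by auto
    then show "v \<in> Reg"
    proof cases
      case 1 then show ?thesis by (auto simp: T0 Reg_def)
    next
      case 2
      then obtain w where w: "w \<in> Tset n \<eta> i" "v = shift (r i) w" by blast
      have "w \<in> {(fst (vvec i \<eta>) + p, snd (vvec i \<eta>) + p) | p. p \<le> n - i}" using w Ti[of i] 2 by simp
      then obtain p where "w = (fst (vvec i \<eta>) + p, snd (vvec i \<eta>) + p)" by blast
      then have "v = (fst (vvec i \<eta>) + (p + r i), snd (vvec i \<eta>) + (p + r i))"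
        using w by (simp add: shift_def)
      then show ?thesis using ptsR[OF 2(1,2)] by simp
    qed
  qed
  have S2R: "S2 \<subseteq> Reg"
  proof
    fix v assume "v \<in> S2"
    then obtain i where i: "i \<le> l" "v \<in> Tset n \<eta> i" unfolding S2_def by auto
    show "v \<in> Reg"
    proof (cases "i = 0")
      case True then show ?thesis using i by (auto simp: T0 Reg_def)
    next
      case False
      have "v \<in> {(fst (vvec i \<eta>) + p, snd (vvec i \<eta>) + p) | p. p \<le> n - i}" using Ti[of i] i False by simp
      then obtain p where "v = (fst (vvec i \<eta>) + p, snd (vvec i \<eta>) + p)" by blast
      then show ?thesis using ptsR[of i p] i False by simp
    qed
  qed
  have RW1: "barv n ` Reg \<subseteq> cspan (barv n ` S1)"
  proof -
    have diag: "barv n (p,p) \<in> cspan (barv n ` S1)" if "1 \<le> p" "p \<le> n" for p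
    proof -
      have "(p,p) \<in> Tset n \<eta> 0" unfolding T0 using that by blast
      then have "(p,p) \<in> S1" unfolding S1_def by (rule UnI1)
      then show ?thesis by (intro cspan_base imageI)
    qed
    have win: "\<exists>R. \<forall>p. R \<le> p \<and> p \<le> R + (n - i) \<longrightarrow>
        barv n (fst (vvec i \<eta>) + p, snd (vvec i \<eta>) + p) \<in> cspan (barv n ` S1)" if "1 \<le> i" "i \<le> l" for i
    proof (intro exI[of _ "r i"] allI impI)
      fix p assume p: "r i \<le> p \<and> p \<le> r i + (n - i)"
      have i0: "i \<noteq> 0" using that by simp
      have q: "p - r i \<le> n - i" using p by linarith
      have "(fst (vvec i \<eta>) + (p - r i), snd (vvec i \<eta>) + (p - r i)) \<in> {(fst (vvec i \<eta>) + q, snd (vvec i \<eta>) + q) | q. q \<le> n - i}"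
        using q by blast
      then have "(fst (vvec i \<eta>) + (p - r i), snd (vvec i \<eta>) + (p - r i)) \<in> Tset n \<eta> i"
        unfolding Ti[OF i0] .
      then have "shift (r i) (fst (vvec i \<eta>) + (p - r i), snd (vvec i \<eta>) + (p - r i)) \<in> shift (r i) ` Tset n \<eta> i"
        by (rule imageI)
      moreover have "i \<in> {1..l}" using that by simp
      ultimately have "shift (r i) (fst (vvec i \<eta>) + (p - r i), snd (vvec i \<eta>) + (p - r i)) \<in> S1"
        unfolding S1_def by blast
      moreover have "shift (r i) (fst (vvec i \<eta>) + (p - r i), snd (vvec i \<eta>) + (p - r i))
          = (fst (vvec i \<eta>) + p, snd (vvec i \<eta>) + p)" using p by (simp add: shift_def)
      ultimately have "(fst (vvec i \<eta>) + p, snd (vvec i \<eta>) + p) \<in> S1" by simp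
      then show "barv n (fst (vvec i \<eta>) + p, snd (vvec i \<eta>) + p) \<in> cspan (barv n ` S1)"
        by (intro cspan_base imageI)
    qed
    have d': "\<forall>p. 1 \<le> p \<and> p \<le> n \<longrightarrow> barv n (p,p) \<in> cspan (barv n ` S1)" using diag by blast
    have w': "\<forall>i. 1 \<le> i \<and> i \<le> l \<longrightarrow> (\<exists>R. \<forall>p. R \<le> p \<and> p \<le> R + (n - i) \<longrightarrow>
        barv n (fst (vvec i \<eta>) + p, snd (vvec i \<eta>) + p) \<in> cspan (barv n ` S1))" using win by blast
    have "\<forall>x y. y \<le> x + yb \<eta> l \<and> x \<le> y + xa \<eta> l \<longrightarrow> barv n (x,y) \<in> cspan (barv n ` S1)"
      using regions[OF cspan_cl cspan_zero Om assms(4) d' w' order_refl] .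
    then show ?thesis by (auto simp: Reg_def)
  qed
  have RW2: "barv n ` Reg \<subseteq> cspan (barv n ` S2)"
  proof -
    have diag: "barv n (p,p) \<in> cspan (barv n ` S2)" if "1 \<le> p" "p \<le> n" for p
    proof -
      have "(p,p) \<in> S2" unfolding S2_def using that T0 by (intro UN_I[of 0]) auto
      then show ?thesis by (intro cspan_base imageI)
    qed
    have win: "\<exists>R. \<forall>p. R \<le> p \<and> p \<le> R + (n - i) \<longrightarrow>
        barv n (fst (vvec i \<eta>) + p, snd (vvec i \<eta>) + p) \<in> cspan (barv n ` S2)" if "1 \<le> i" "i \<le> l" for i
    proof (intro exI[of _ 0] allI impI)
      fix p assume p: "0 \<le> p \<and> p \<le> 0 + (n - i)"
      have i0: "i \<noteq> 0" using that by simp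
      have pp: "p \<le> n - i" using p by simp
      have "(fst (vvec i \<eta>) + p, snd (vvec i \<eta>) + p) \<in> {(fst (vvec i \<eta>) + q, snd (vvec i \<eta>) + q) | q. q \<le> n - i}"
        using pp by blast
      then have "(fst (vvec i \<eta>) + p, snd (vvec i \<eta>) + p) \<in> Tset n \<eta> i"
        unfolding Ti[OF i0] .
      moreover have "i \<in> {0..l}" using that by simp
      ultimately have "(fst (vvec i \<eta>) + p, snd (vvec i \<eta>) + p) \<in> S2"
        unfolding S2_def by blast
      then show "barv n (fst (vvec i \<eta>) + p, snd (vvec i \<eta>) + p) \<in> cspan (barv n ` S2)"
        by (intro cspan_base imageI)
    qed
    have d': "\<forall>p. 1 \<le> p \<and> p \<le> n \<longrightarrow> barv n (p,p) \<in> cspan (barv n ` S2)" using diag by blast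
    have w': "\<forall>i. 1 \<le> i \<and> i \<le> l \<longrightarrow> (\<exists>R. \<forall>p. R \<le> p \<and> p \<le> R + (n - i) \<longrightarrow>
        barv n (fst (vvec i \<eta>) + p, snd (vvec i \<eta>) + p) \<in> cspan (barv n ` S2))" using win by blast
    have "\<forall>x y. y \<le> x + yb \<eta> l \<and> x \<le> y + xa \<eta> l \<longrightarrow> barv n (x,y) \<in> cspan (barv n ` S2)"
      using regions[OF cspan_cl cspan_zero Om assms(4) d' w' order_refl] .
    then show ?thesis by (auto simp: Reg_def)
  qed
  have eq: "cspan (barv n ` S1) = cspan (barv n ` S2)"
  proof -
    have 1: "barv n ` S2 \<subseteq> cspan (barv n ` S1)" using image_mono[OF S2R] RW1 by (rule order_trans)
    have 2: "barv n ` S1 \<subseteq> cspan (barv n ` S2)" using image_mono[OF S1R] RW2 by (rule order_trans)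
    show ?thesis unfolding cspan_eq using 1 2 by (rule conjI[rotated])
  qed
  have last: "barv n (shift s (vvec l \<eta>)) \<in> cspan (barv n ` S2)" for s
  proof -
    have "shift s (vvec l \<eta>) \<in> Reg" using ptsR[of l s] assms by (simp add: shift_def)
    then show ?thesis using RW2 by (rule subsetD[OF _ imageI, rotated])
  qed
  have "cspan (barv n ` S1) = cspan (barv n ` S2) \<and> (\<forall>s. barv n (shift s (vvec l \<eta>)) \<in> cspan (barv n ` S2))"
    using eq last by blast
  from this[unfolded S1_def S2_def] show ?thesis .
qed

end
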